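(* Let $\alpha > -1$ and $k \geq 1$, and let $M_k^{\alpha} \in \mathbb{R}^{k\times k}$ be the Hankel matrix with entries $(M_k^{\alpha})_{ij} = \Gamma(i+j+\alpha-1)$, $1 \leq i,j \leq k$ (i.e. the moment matrix of $\gamma_m = \int_0^\infty x^{m+\alpha}e^{-x}dx = \Gamma(m+\alpha+1)$). Then its Cholesky decomposition is $M_k^{\alpha} = (R_k^{\alpha})^T R_k^{\alpha}$, where $R_k^{\alpha}$ is the upper triangular matrix with entries $$R^{\alpha}_{ij} = \frac{(j-1)!}{(j-i)!}\,\frac{\Gamma(\alpha+j)}{\sqrt{\Gamma(i)\,\Gamma(\alpha+i)}}, \qquad 1 \leq i \leq j \leq k,$$ and $R^{\alpha}_{ij}=0$ for $i>j$.
   Context: $\Gamma$ denotes the Gamma function. *)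

theory Defs
  imports "HOL-Analysis.Analysis"
begin

definition hankel_gamma :: "real \<Rightarrow> nat \<Rightarrow> nat \<Rightarrow> real" where
  "hankel_gamma \<alpha> i j = Gamma (real (i + j) + \<alpha> - 1)"

definition chol_R :: "real \<Rightarrow> nat \<Rightarrow> nat \<Rightarrow> real" where
  "chol_R \<alpha> i j =
     (if i \<le> j
      then fact (j - 1) / fact (j - i) * Gamma (\<alpha> + real j) / sqrt (Gamma (real i) * Gamma (\<alpha> + real i))
      else 0)"

end

theory Submission imports Defs begin
definition ff :: "real \<Rightarrow> nat \<Rightarrow> real" where "ff y m = (\<Prod>i<m. y - real i)"

lemma ff_Suc: "ff y (Suc m) = ff y m * (y - real m)"
  by (simp add: ff_def)

lemma vand: "pochhammer (x+y) a = (\<Sum>m\<le>a. real (a choose m) * ff y m * pochhammer (x + real m) (a-m))"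
proof (induction a arbitrary: x)
  case 0
  then show ?case by (simp add: ff_def)
next
  case (Suc a)
  define g where "g m = ff y m * pochhammer (x + real m) (Suc a - m)" for m
  have t: "(x+y) * (real (a choose m) * ff y m * pochhammer (x + 1 + real m) (a-m))
     = real (a choose m) * g m + real (a choose m) * g (Suc m)" if "m \<le> a" for m
  proof -
    have e1: "pochhammer (x + real m) (Suc a - m) = (x + real m) * pochhammer (x + 1 + real m) (a-m)"
      using that by (simp add: Suc_diff_le pochhammer_rec add_ac)
    have e2: "pochhammer (x + real (Suc m)) (Suc a - Suc m) = pochhammer (x + 1 + real m) (a-m)"
      by (simp add: add_ac)
    show ?thesis unfolding g_def e1 e2 ff_Suc by (simp add: algebra_simps)
  qed
  have "pochhammer (x+y) (Suc a) = (x+y) * pochhammer (x+1+y) a"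
    by (simp add: pochhammer_rec add_ac)
  also have "\<dots> = (x+y) * (\<Sum>m\<le>a. real (a choose m) * ff y m * pochhammer (x + 1 + real m) (a-m))"
    using Suc[of "x+1"] by simp
  also have "\<dots> = (\<Sum>m\<le>a. real (a choose m) * g m) + (\<Sum>m\<le>a. real (a choose m) * g (Suc m))"
    by (simp add: sum_distrib_left t sum.distrib)
  also have "(\<Sum>m\<le>a. real (a choose m) * g m) = (\<Sum>m\<le>Suc a. real (a choose m) * g m)"
    by simp
  also have "\<dots> = g 0 + (\<Sum>m\<le>a. real (a choose Suc m) * g (Suc m))"
    by (subst sum.atMost_Suc_shift) simp
  finally have "pochhammer (x+y) (Suc a) = g 0 + (\<Sum>m\<le>a. real (Suc a choose Suc m) * g (Suc m))"
    by (simp add: sum.distrib algebra_simps)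
  also have "\<dots> = (\<Sum>m\<le>Suc a. real (Suc a choose m) * g m)"
    by (subst sum.atMost_Suc_shift) simp
  finally show ?case by (simp add: g_def mult.assoc)
qed

lemma ff_nat: "ff (real b) m = (if m \<le> b then fact b / fact (b-m) else 0)"
proof (induction m)
  case 0 then show ?case by (simp add: ff_def)
next
  case (Suc m)
  show ?case
  proof (cases "Suc m \<le> b")
    case True
    have "fact (b - m) = real (b - m) * fact (b - Suc m)"
      using True by (metis Suc_diff_Suc Suc_le_lessD fact_Suc of_nat_Suc diff_Suc_Suc)
    have pos: "real (b - m) > 0" using True by simp
    have "ff (real b) (Suc m) = fact b / fact (b - m) * real (b - m)"
      using True Suc by (simp add: ff_Suc of_nat_diff)
    also have "\<dots> = fact b / fact (b - Suc m)"
      unfolding \<open>fact (b - m) = real (b - m) * fact (b - Suc m)\<close> using pos by simp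
    finally show ?thesis using True by simp
  next
    case False
    then have "b \<in> {..<Suc m}" by simp
    then have "ff (real b) (Suc m) = 0" unfolding ff_def
      by (intro prod_zero) auto
    then show ?thesis using False by simp
  qed
qed

lemma term_eq:
  fixes \<alpha> :: real and a b m :: nat
  assumes "\<alpha> > -1" "m \<le> a"
  shows "chol_R \<alpha> (Suc m) (Suc a) * chol_R \<alpha> (Suc m) (Suc b)
     = real (a choose m) * ff (real b) m * pochhammer (\<alpha> + 1 + real m) (a-m) * Gamma (\<alpha> + 1 + real b)"
proof (cases "m \<le> b")
  case False
  then show ?thesis by (simp add: chol_R_def ff_nat)
next
  case True
  define x where "x = \<alpha> + 1"
  have xm: "x + real m > 0" using assms x_def by simp
  have gm: "Gamma (x + real m) > 0" using xm by (simp add: Gamma_real_pos)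
  have fm: "Gamma (real (Suc m)) = fact m" using Gamma_fact[of m] by simp
  have nz: "x + real m \<notin> \<int>\<^sub>\<le>\<^sub>0" using xm by (auto elim!: nonpos_Ints_cases)
  have ga: "Gamma (x + real a) = pochhammer (x + real m) (a-m) * Gamma (x + real m)"
    using pochhammer_Gamma[OF nz, of "a-m"] assms gm by (simp add: of_nat_diff)
  have sq: "sqrt (fact m * Gamma (x + real m)) * sqrt (fact m * Gamma (x + real m)) = fact m * Gamma (x + real m)"
    using real_sqrt_mult_self[of "fact m * Gamma (x + real m)"] gm by simp
  have ch: "real (a choose m) = fact a / (fact m * fact (a - m))"
    using binomial_fact[OF assms(2)] by simp
  have "chol_R \<alpha> (Suc m) (Suc a) * chol_R \<alpha> (Suc m) (Suc b)
    = fact a / fact (a-m) * Gamma (x + real a) * (fact b / fact (b-m) * Gamma (x + real b))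
       / (sqrt (fact m * Gamma (x + real m)) * sqrt (fact m * Gamma (x + real m)))"
    using assms True fm unfolding chol_R_def x_def by (simp add: add_ac)
  also have "\<dots> = fact a / fact (a-m) * Gamma (x + real a) * (fact b / fact (b-m) * Gamma (x + real b))
       / (fact m * Gamma (x + real m))" by (simp only: sq)
  also have "\<dots> = real (a choose m) * ff (real b) m * pochhammer (x + real m) (a-m) * Gamma (x + real b)"
    unfolding ch ga using True gm by (simp add: ff_nat field_simps)
  finally show ?thesis by (simp add: x_def)
qed

theorem proposition5:
  fixes \<alpha> :: real and k :: nat
  assumes "\<alpha> > -1" and "k \<ge> 1"
  shows "(\<forall>i\<in>{1..k}. \<forall>j\<in>{1..k}.
            hankel_gamma \<alpha> i j = (\<Sum>l=1..k. chol_R \<alpha> l i * chol_R \<alpha> l j))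
       \<and> (\<forall>i\<in>{1..k}. \<forall>j\<in>{1..k}. j < i \<longrightarrow> chol_R \<alpha> i j = 0)
       \<and> (\<forall>i\<in>{1..k}. chol_R \<alpha> i i > 0)"
proof (intro conjI ballI impI)
  fix i j assume i: "i \<in> {1..k}" and j: "j \<in> {1..k}"
  obtain a where a: "i = Suc a" using i by (cases i) auto
  obtain b where b: "j = Suc b" using j by (cases j) auto
  have "(\<Sum>l=1..k. chol_R \<alpha> l i * chol_R \<alpha> l j) = (\<Sum>l=1..i. chol_R \<alpha> l i * chol_R \<alpha> l j)"
    using i by (intro sum.mono_neutral_right) (auto simp: chol_R_def)
  also have "\<dots> = (\<Sum>m\<le>a. chol_R \<alpha> (Suc m) i * chol_R \<alpha> (Suc m) j)"
    unfolding a One_nat_def sum.atLeast_Suc_atMost_Suc_shift atLeast0AtMost by (simp add: comp_def)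
  also have "\<dots> = (\<Sum>m\<le>a. real (a choose m) * ff (real b) m * pochhammer (\<alpha> + 1 + real m) (a-m)) * Gamma (\<alpha> + 1 + real b)"
    unfolding a b sum_distrib_right using assms(1) by (intro sum.cong refl term_eq) auto
  also have "\<dots> = pochhammer (\<alpha> + 1 + real b) a * Gamma (\<alpha> + 1 + real b)"
    using vand[of "\<alpha>+1" "real b" a] by simp
  also have "\<dots> = Gamma (\<alpha> + 1 + real b + real a)"
  proof -
    have nz: "\<alpha> + 1 + real b \<notin> \<int>\<^sub>\<le>\<^sub>0" using assms(1) by (auto elim!: nonpos_Ints_cases)
    have "Gamma (\<alpha> + 1 + real b) > 0" using assms(1) by (simp add: Gamma_real_pos)
    then show ?thesis using pochhammer_Gamma[OF nz, of a] by simp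
  qed
  also have "\<dots> = hankel_gamma \<alpha> i j" unfolding hankel_gamma_def a b by (simp add: algebra_simps)
  finally show "hankel_gamma \<alpha> i j = (\<Sum>l=1..k. chol_R \<alpha> l i * chol_R \<alpha> l j)" by simp
next
  fix i j :: nat assume "j < i" then show "chol_R \<alpha> i j = 0" by (simp add: chol_R_def)
next
  fix i :: nat assume i: "i \<in> {1..k}"
  have "Gamma (real i) > 0" "Gamma (\<alpha> + real i) > 0" using i assms(1) by (auto intro!: Gamma_real_pos)
  then show "chol_R \<alpha> i i > 0" by (simp add: chol_R_def)
qed

end
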